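(* Suppose $U_1,\dots,U_N,V_1,\dots,V_n\in\mathbb{R}^d$ form a margin-$m$, relative-bias-$0$ embedding of $S_{n,k}$ with $0<m<1$. Then for every $T\subset[n]$ with $k\le|T|\le\min\bigl(k+\frac{2km}{1-m},\,n-1\bigr)$ there exist $h\in\mathbb{S}^{d-1}$ and $c\in\mathbb{R}$ such that $\langle h,V_i\rangle\ge c$ for all $i\in T$ and $\langle h,V_j\rangle\le c$ for all $j\notin T$.
   Context: $S_{n,k}\in\{0,1\}^{\binom{n}{k}\times n}$ (so $N=\binom nk$) is the matrix whose rows are all the distinct vectors in $\{0,1\}^n$ with exactly $k$ ones, each appearing exactly once. For $A\in\{0,1\}^{N\times n}$ and $m\ge0$, unit vectors $U_1,\dots,U_N,V_1,\dots,V_n\in\mathbb{R}^d$ form a margin-$m$, relative-bias-$0$ embedding of $A$ if $\langle U_j,V_i\rangle\ge m$ whenever $A_{ji}=1$ and $\langle U_j,V_i\rangle\le -m$ whenever $A_{ji}=0$. *)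

theory Defs
  imports "HOL-Analysis.Analysis"
begin

text \<open>A 0/1 matrix with rows indexed by a set R and columns indexed by {..<n}
  is represented by a predicate A :: 'r \<Rightarrow> nat \<Rightarrow> bool (A j i = True means entry 1).\<close>

definition margin_embedding ::
  "'r set \<Rightarrow> nat \<Rightarrow> ('r \<Rightarrow> nat \<Rightarrow> bool) \<Rightarrow> real \<Rightarrow> ('r \<Rightarrow> 'a::real_inner) \<Rightarrow> (nat \<Rightarrow> 'a) \<Rightarrow> bool"
  where "margin_embedding R n A m U V \<longleftrightarrow>
    (\<forall>j\<in>R. norm (U j) = 1) \<and> (\<forall>i<n. norm (V i) = 1) \<and>
    (\<forall>j\<in>R. \<forall>i<n. (A j i \<longrightarrow> inner (U j) (V i) \<ge> m) \<and>
                     (\<not> A j i \<longrightarrow> inner (U j) (V i) \<le> - m))"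

text \<open>Rows of S_{n,k}: each k-subset of {..<n} appears exactly once, as its indicator vector.\<close>

definition ksubsets :: "nat \<Rightarrow> nat \<Rightarrow> nat set set"
  where "ksubsets n k = {S. S \<subseteq> {..<n} \<and> card S = k}"

definition S_matrix :: "nat set \<Rightarrow> nat \<Rightarrow> bool"
  where "S_matrix S i \<longleftrightarrow> i \<in> S"

end

theory Submission
  imports Defs
begin

lemma binom_ratio:
  fixes t k :: nat
  assumes "1 \<le> k" "k \<le> t"
  shows "k * ((t - 1) choose k) = (t - k) * ((t - 1) choose (k - 1))"
proof (cases "t = k")
  case True
  then show ?thesis using assms by simp
next
  case False
  then have "k < t" using assms by simp
  obtain a where ka: "k = Suc a" using assms by (cases k) auto
  define b where "b = t - k - 1"
  have tb: "t = Suc (Suc (a + b))" using \<open>k < t\<close> ka b_def by simp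
  show ?thesis using Suc_times_binomial_add[of a b] ka tb by simp
qed

lemma inner_ge_m1:
  fixes x y :: "'a::real_inner"
  assumes "norm x = 1" "norm y = 1"
  shows "-1 \<le> inner x y"
proof -
  have "inner (-x) y \<le> norm (-x) * norm y" by (rule norm_cauchy_schwarz)
  then show ?thesis using assms by simp
qed

theorem propositionG1:
  fixes n k :: nat and m :: real
    and U :: "nat set \<Rightarrow> 'a::euclidean_space" and V :: "nat \<Rightarrow> 'a"
  assumes emb: "margin_embedding (ksubsets n k) n S_matrix m U V"
    and m_pos: "0 < m" and m_lt1: "m < 1"
    and T_sub: "T \<subseteq> {..<n}"
    and T_lo: "k \<le> card T"
    and T_hi1: "real (card T) \<le> real k + 2 * real k * m / (1 - m)"
    and T_hi2: "real (card T) \<le> real n - 1"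
  shows "\<exists>h c. norm h = 1 \<and> (\<forall>i\<in>T. inner h (V i) \<ge> c) \<and>
                (\<forall>j\<in>{..<n} - T. inner h (V j) \<le> c)"
proof -
  define t where "t = card T"
  have finT: "finite T" using T_sub finite_subset by blast
  define F where "F = {S. S \<subseteq> T \<and> card S = k}"
  have finF: "finite F" unfolding F_def using finT by simp
  have cardF: "card F = t choose k" unfolding F_def t_def using n_subsets[OF finT] by simp
  have Fk: "F \<subseteq> ksubsets n k" unfolding F_def ksubsets_def using T_sub by auto
  have nU: "\<And>S. S \<in> F \<Longrightarrow> norm (U S) = 1" using emb Fk unfolding margin_embedding_def by blast
  have nV: "\<And>i. i < n \<Longrightarrow> norm (V i) = 1" using emb unfolding margin_embedding_def by blast
  have pos: "\<And>S i. S \<in> F \<Longrightarrow> i < n \<Longrightarrow> i \<in> S \<Longrightarrow> inner (U S) (V i) \<ge> m"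
    using emb Fk unfolding margin_embedding_def S_matrix_def by blast
  have neg: "\<And>S i. S \<in> F \<Longrightarrow> i < n \<Longrightarrow> i \<notin> S \<Longrightarrow> inner (U S) (V i) \<le> - m"
    using emb Fk unfolding margin_embedding_def S_matrix_def by blast
  define h where "h = (\<Sum>S\<in>F. U S)"
  define c where "c = - m * real (t choose k)"
  have out: "inner h (V j) \<le> c" if j: "j \<in> {..<n} - T" for j
  proof -
    have "inner h (V j) = (\<Sum>S\<in>F. inner (U S) (V j))" unfolding h_def by (simp add: inner_sum_left)
    also have "\<dots> \<le> (\<Sum>S\<in>F. - m)"
    proof (rule sum_mono)
      fix S assume "S \<in> F"
      then have "j \<notin> S" using j unfolding F_def by auto
      then show "inner (U S) (V j) \<le> - m" using neg[OF \<open>S \<in> F\<close>] j by auto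
    qed
    also have "\<dots> = c" unfolding c_def using cardF by simp
    finally show ?thesis .
  qed
  have inn: "inner h (V i) \<ge> c" if i: "i \<in> T" for i
  proof -
    have kpos: "1 \<le> k"
    proof (rule ccontr)
      assume "\<not> 1 \<le> k" then have "k = 0" by simp
      then have "t = 0" using T_hi1 unfolding t_def by simp
      then show False using i finT unfolding t_def by auto
    qed
    have kt: "k \<le> t" using T_lo t_def by simp
    have iN: "i < n" using i T_sub by auto
    define B where "B = {S \<in> F. i \<notin> S}"
    define A where "A = {S \<in> F. i \<in> S}"
    have B_eq: "B = {S. S \<subseteq> T - {i} \<and> card S = k}" unfolding B_def F_def by auto
    have cardB: "card B = (t - 1) choose k"
      unfolding B_eq using n_subsets[of "T - {i}" k] finT i unfolding t_def by simp
    have AB: "card A + card B = card F"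
    proof -
      have "F = A \<union> B" "A \<inter> B = {}" unfolding A_def B_def by auto
      then show ?thesis using finF card_Un_disjoint[of A B]
        by (metis finite_Un)
    qed
    have cardA: "card A = (t - 1) choose (k - 1)"
      using AB cardB cardF choose_reduce_nat[of t k] kpos kt by simp
    have ratio: "real k * real (card B) = real (t - k) * real (card A)"
      using binom_ratio[OF kpos kt] cardA cardB by (metis of_nat_mult)
    have key: "(1 - m) * real (card B) \<le> 2 * m * real (card A)"
    proof -
      have "real t - real k \<le> 2 * real k * m / (1 - m)" using T_hi1 t_def by simp
      then have "(1 - m) * (real t - real k) \<le> 2 * real k * m" using m_lt1
        by (simp add: field_simps)
      then have "(1 - m) * (real t - real k) * real (card A) \<le> 2 * real k * m * real (card A)"
        by (simp add: mult_right_mono)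
      moreover have "real (t - k) = real t - real k" using kt by simp
      ultimately have "(1 - m) * (real (t - k) * real (card A)) \<le> real k * (2 * m * real (card A))"
        by (simp add: algebra_simps)
      then have "real k * ((1 - m) * real (card B)) \<le> real k * (2 * m * real (card A))"
      proof -
        have "real k * ((1 - m) * real (card B)) = (1 - m) * (real k * real (card B))" by simp
        also have "\<dots> = (1 - m) * (real (t - k) * real (card A))" using ratio by (rule arg_cong)
        also have "\<dots> \<le> real k * (2 * m * real (card A))" by fact
        finally show ?thesis .
      qed
      then show ?thesis using kpos by simp
    qed
    have "inner h (V i) = (\<Sum>S\<in>F. inner (U S) (V i))" unfolding h_def by (simp add: inner_sum_left)
    also have "\<dots> = (\<Sum>S\<in>A. inner (U S) (V i)) + (\<Sum>S\<in>B. inner (U S) (V i))"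
    proof -
      have "F = A \<union> B" "A \<inter> B = {}" unfolding A_def B_def by auto
      then show ?thesis using finF sum.union_disjoint[of A B]
        by (metis finite_Un)
    qed
    also have "\<dots> \<ge> (\<Sum>S\<in>A. m) + (\<Sum>S\<in>B. -1)"
    proof (rule add_mono)
      show "(\<Sum>S\<in>A. m) \<le> (\<Sum>S\<in>A. inner (U S) (V i))"
        by (rule sum_mono) (use pos iN A_def in auto)
      show "(\<Sum>S\<in>B. -1) \<le> (\<Sum>S\<in>B. inner (U S) (V i))"
        by (rule sum_mono) (use inner_ge_m1 nU nV iN B_def in auto)
    qed
    finally have "inner h (V i) \<ge> m * real (card A) - real (card B)" by (simp add: mult.commute)
    moreover have "c = - m * (real (card A) + real (card B))"
      unfolding c_def using AB cardF by (metis of_nat_add)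
    ultimately show ?thesis using key by (simp add: algebra_simps)
  qed
  obtain j where j: "j \<in> {..<n} - T"
  proof -
    have "card T < card {..<n}" using T_hi2 by simp
    then have "T \<noteq> {..<n}" by auto
    then show ?thesis using that T_sub by auto
  qed
  have cneg: "c < 0" unfolding c_def using m_pos T_lo t_def zero_less_binomial[of k t] by simp
  have hnz: "h \<noteq> 0" using out[OF j] cneg by auto
  define r where "r = norm h"
  have rpos: "r > 0" using hnz r_def by simp
  show ?thesis
  proof (intro exI conjI ballI)
    show "norm (h /\<^sub>R r) = 1" using rpos r_def by simp
    fix i assume "i \<in> T"
    then have "c \<le> inner h (V i)" using inn by blast
    then show "c / r \<le> inner (h /\<^sub>R r) (V i)" using rpos
      by (simp add: divide_right_mono inverse_eq_divide)
  next
    fix j assume "j \<in> {..<n} - T"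
    then have "inner h (V j) \<le> c" using out by blast
    then show "inner (h /\<^sub>R r) (V j) \<le> c / r" using rpos
      by (simp add: divide_right_mono inverse_eq_divide)
  qed
qed

end
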